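(* Let $G$ be a non-complete double-critical $k$-chromatic graph and let $x\in V(G)$ with $\deg_G(x)=k+1$. Then every component of the complement $\overline{G_x}$ is either an isolated vertex or a cycle, there is at least one cycle component, and every cycle component has length at least $5$.
   Context: All graphs are finite and simple. A graph $G$ is (vertex-)critical if $\chi(G-v)<\chi(G)$ for every vertex $v\in V(G)$. A critical graph $G$ is double-critical if $\chi(G-x-y)\le\chi(G)-2$ for every edge $xy\in E(G)$. For a vertex $x$, $G_x:=G[N(x)]$ denotes the subgraph induced by the neighbourhood of $x$, and $\overline{G_x}$ its complement graph. *)

theory Defs
  imports Main
begin

definition graph :: "'a set \<Rightarrow> ('a \<Rightarrow> 'a \<Rightarrow> bool) \<Rightarrow> bool" where
  "graph V E \<longleftrightarrow> finite V \<and> (\<forall>x y. E x y \<longrightarrow> x \<in> V \<and> y \<in> V \<and> x \<noteq> y \<and> E y x)"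

definition colouring :: "'a set \<Rightarrow> ('a \<Rightarrow> 'a \<Rightarrow> bool) \<Rightarrow> nat \<Rightarrow> ('a \<Rightarrow> nat) \<Rightarrow> bool" where
  "colouring V E k f \<longleftrightarrow> f ` V \<subseteq> {..<k} \<and> (\<forall>x\<in>V. \<forall>y\<in>V. E x y \<longrightarrow> f x \<noteq> f y)"

text \<open>Chromatic number of the subgraph induced by V (so chi (V - S) E is the
  chromatic number of G - S).\<close>
definition chi :: "'a set \<Rightarrow> ('a \<Rightarrow> 'a \<Rightarrow> bool) \<Rightarrow> nat" where
  "chi V E = (LEAST k. \<exists>f. colouring V E k f)"

definition critical :: "'a set \<Rightarrow> ('a \<Rightarrow> 'a \<Rightarrow> bool) \<Rightarrow> bool" where
  "critical V E \<longleftrightarrow> (\<forall>v\<in>V. chi (V - {v}) E < chi V E)"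

definition double_critical :: "'a set \<Rightarrow> ('a \<Rightarrow> 'a \<Rightarrow> bool) \<Rightarrow> bool" where
  "double_critical V E \<longleftrightarrow> critical V E \<and>
     (\<forall>x y. E x y \<longrightarrow> chi (V - {x, y}) E \<le> chi V E - 2)"

definition complete_graph :: "'a set \<Rightarrow> ('a \<Rightarrow> 'a \<Rightarrow> bool) \<Rightarrow> bool" where
  "complete_graph V E \<longleftrightarrow> (\<forall>x\<in>V. \<forall>y\<in>V. x \<noteq> y \<longrightarrow> E x y)"

definition nbhd :: "'a set \<Rightarrow> ('a \<Rightarrow> 'a \<Rightarrow> bool) \<Rightarrow> 'a \<Rightarrow> 'a set" where
  "nbhd V E x = {y\<in>V. E x y}"

definition degree :: "'a set \<Rightarrow> ('a \<Rightarrow> 'a \<Rightarrow> bool) \<Rightarrow> 'a \<Rightarrow> nat" where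
  "degree V E x = card (nbhd V E x)"

definition compl_edges :: "('a \<Rightarrow> 'a \<Rightarrow> bool) \<Rightarrow> 'a \<Rightarrow> 'a \<Rightarrow> bool" where
  "compl_edges E u v \<longleftrightarrow> u \<noteq> v \<and> \<not> E u v"

definition component_of :: "'a set \<Rightarrow> ('a \<Rightarrow> 'a \<Rightarrow> bool) \<Rightarrow> 'a \<Rightarrow> 'a set" where
  "component_of V E u = {v\<in>V. (\<lambda>a b. a \<in> V \<and> b \<in> V \<and> E a b)\<^sup>*\<^sup>* u v}"

definition components :: "'a set \<Rightarrow> ('a \<Rightarrow> 'a \<Rightarrow> bool) \<Rightarrow> 'a set set" where
  "components V E = component_of V E ` V"

text \<open>Its length is then n = card K.\<close>
definition is_cycle_graph :: "'a set \<Rightarrow> ('a \<Rightarrow> 'a \<Rightarrow> bool) \<Rightarrow> bool" where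
  "is_cycle_graph K E \<longleftrightarrow> (\<exists>vs. distinct vs \<and> set vs = K \<and> length vs \<ge> 3 \<and>
     (\<forall>i<length vs. \<forall>j<length vs.
        E (vs ! i) (vs ! j) \<longleftrightarrow> (j = Suc i mod length vs \<or> i = Suc j mod length vs)))"

end

theory Submission
  imports Defs
begin


lemma three_nb:
  assumes "finite N" "card {b\<in>N. R a b} \<le> 2" "p\<in>N" "q\<in>N" "r\<in>N"
    "R a p" "R a q" "R a r" "p\<noteq>q" "p\<noteq>r" "q\<noteq>r"
  shows False
proof -
  have "{p,q,r} \<subseteq> {b\<in>N. R a b}" using assms by auto
  hence "card {p,q,r} \<le> card {b\<in>N. R a b}" by (rule card_mono[rotated]) (use assms in auto)
  moreover have "card {p,q,r} = 3" using assms by auto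
  ultimately show False using assms by linarith
qed

definition pth :: "('a \<Rightarrow> 'a \<Rightarrow> bool) \<Rightarrow> 'a list \<Rightarrow> bool" where
  "pth R vs \<longleftrightarrow> (\<forall>i. Suc i < length vs \<longrightarrow> R (vs!i) (vs!Suc i))"

lemma arith_aux:
  assumes "(n::nat) \<ge> 3" "i < n"
  shows "Suc i mod n < n" "Suc i mod n \<noteq> (if i = 0 then n-1 else i-1)"
    "(if i = 0 then n-1 else i-1) < n"
    "i = Suc (if i = 0 then n-1 else i-1) mod n"
    "Suc i mod n \<noteq> i"
proof -
  show "Suc i mod n < n" using assms by simp
  show "Suc i mod n \<noteq> (if i = 0 then n-1 else i-1)"
  proof (cases "Suc i < n")
    case True thus ?thesis using assms by auto
  next
    case False hence "Suc i = n" using assms by simp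
    thus ?thesis using assms by auto
  qed
  show "(if i = 0 then n-1 else i-1) < n" using assms by auto
  show "i = Suc (if i = 0 then n-1 else i-1) mod n" using assms by auto
  show "Suc i mod n \<noteq> i"
  proof (cases "Suc i < n")
    case True thus ?thesis using assms by auto
  next
    case False hence "Suc i = n" using assms by simp
    thus ?thesis using assms by auto
  qed
qed

lemma singleton_comp:
  assumes "u \<in> N" "\<not>(\<exists>b\<in>N. R u b)"
  shows "component_of N R u = {u}"
proof -
  have "v = u" if "(\<lambda>a b. a \<in> N \<and> b \<in> N \<and> R a b)\<^sup>*\<^sup>* u v" for v
    using that by (rule converse_rtranclpE) (use assms in auto)
  thus ?thesis using assms unfolding component_of_def by auto
qed

lemma cycle_comp:
  assumes fin: "finite N" and sym: "\<And>a b. R a b \<Longrightarrow> R b a" and irr: "\<And>a. \<not> R a a"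
    and deg: "\<And>a. a \<in> N \<Longrightarrow> card {b\<in>N. R a b} \<le> 2"
    and P: "\<And>a b. a\<in>N \<Longrightarrow> b\<in>N \<Longrightarrow> R a b \<Longrightarrow> \<exists>c\<in>N. R a c \<and> c \<noteq> b"
    and u: "u \<in> N" and ub: "ub \<in> N" "R u ub"
  shows "is_cycle_graph (component_of N R u) R"
proof -
  define S where "S = {vs. distinct vs \<and> set vs \<subseteq> N \<and> vs \<noteq> [] \<and> hd vs = u \<and> pth R vs}"
  have "[u] \<in> S" using u unfolding S_def pth_def by auto
  moreover have "\<forall>vs. vs \<in> S \<longrightarrow> length vs < Suc (card N)"
    unfolding S_def using fin by (auto simp: less_Suc_eq_le) (metis card_mono distinct_card)
  ultimately obtain vs where vsS: "vs \<in> S" and mx: "\<And>ws. ws \<in> S \<Longrightarrow> length ws \<le> length vs"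
    using ex_has_greatest_nat[of "\<lambda>vs. vs \<in> S" "[u]" length "Suc (card N)"] by blast
  define n where "n = length vs"
  have dist: "distinct vs" and sub: "set vs \<subseteq> N" and ne: "vs \<noteq> []" and hd: "hd vs = u"
    and pt: "\<And>i. Suc i < n \<Longrightarrow> R (vs!i) (vs!Suc i)"
    using vsS unfolding S_def pth_def n_def by auto
  have n1: "n \<ge> 1" using ne n_def by (cases vs) auto
  have v0: "vs!0 = u" using hd ne by (cases vs) auto
  have inN: "\<And>i. i < n \<Longrightarrow> vs!i \<in> N" using sub n_def by auto
  define l where "l = n - 1"
  have ln: "l < n" "Suc l = n" using n1 l_def by auto
  have closed: "t \<in> set vs" if "t \<in> N" "R (vs!l) t" for t
  proof (rule ccontr)
    assume nt: "t \<notin> set vs"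
    have "vs @ [t] \<in> S"
      unfolding S_def pth_def
    proof (intro CollectI conjI allI impI)
      fix i assume "Suc i < length (vs @ [t])"
      hence "Suc i < n \<or> Suc i = n" by (auto simp add: n_def)
      thus "R ((vs @ [t]) ! i) ((vs @ [t]) ! Suc i)"
      proof
        assume "Suc i < n" thus ?thesis using pt by (simp add: nth_append n_def)
      next
        assume "Suc i = n" hence "i = l" using l_def by auto
        have li: "l = i" using `Suc i = n` l_def by simp
        have "(vs @ [t]) ! i = vs ! l" "(vs @ [t]) ! Suc i = t" unfolding li using `Suc i = n` by (auto simp add: nth_append n_def)
        thus ?thesis using that by simp
      qed
    qed (use dist nt sub that ne hd in auto)
    from mx[OF this] show False by simp
  qed
  have n2: "n \<ge> 2"
  proof (rule ccontr)
    assume "\<not> n \<ge> 2" hence "n = 1" using n1 by simp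
    hence "l = 0" using l_def by simp
    hence "ub \<in> set vs" using closed ub v0 by auto
    hence "ub = u" using `n = 1` v0 n_def by (cases vs) auto
    thus False using ub irr by auto
  qed
  have n3: "n \<ge> 3"
  proof (rule ccontr)
    assume "\<not> n \<ge> 3" hence n_2: "n = 2" using n2 by simp
    hence "l = 1" using l_def by simp
    have "R (vs!0) (vs!1)" using pt[of 0] n_2 by simp
    hence r10: "R (vs!1) (vs!0)" by (rule sym)
    obtain c where c: "c \<in> N" "R (vs!1) c" "c \<noteq> vs!0" using P[OF inN[of 1] inN[of 0] r10] n_2 by auto
    have "c \<in> set vs" using closed c `l = 1` by auto
    then obtain j where "j < n" "c = vs!j" by (auto simp: in_set_conv_nth n_def)
    hence "j = 1" using c n_2 by (cases j) auto
    thus False using c `c = vs!j` irr by auto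
  qed
  have rl0: "R (vs!l) (vs!0)"
  proof -
    have "R (vs!(l-1)) (vs!l)" using pt[of "l-1"] ln n3 by (simp add: Suc_diff_1)
    hence r: "R (vs!l) (vs!(l-1))" by (rule sym)
    have "l-1 < n" using ln by auto
    then obtain c where c: "c \<in> N" "R (vs!l) c" "c \<noteq> vs!(l-1)" using P[OF inN[of l] inN[of "l-1"] r] ln by blast
    have "c \<in> set vs" using closed c by auto
    then obtain j where j: "j < n" "c = vs!j" by (auto simp: in_set_conv_nth n_def)
    have "j \<noteq> l" using c j irr by auto
    moreover have "j \<noteq> l - 1" using c j by auto
    ultimately have jl: "j < l - 1" using j ln by auto
    show ?thesis
    proof (cases "j = 0")
      case True thus ?thesis using c j by simp
    next
      case False
      have a1: "R (vs!j) (vs!(j-1))" using pt[of "j-1"] False jl ln sym by auto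
      have a2: "R (vs!j) (vs!(Suc j))" using pt[of j] jl ln by auto
      have a3: "R (vs!j) (vs!l)" using c j sym by auto
      have d: "vs!(j-1) \<noteq> vs!(Suc j)" "vs!(j-1) \<noteq> vs!l" "vs!(Suc j) \<noteq> vs!l"
        using dist jl ln by (auto simp: nth_eq_iff_index_eq n_def)
      have m: "vs!j \<in> N" "vs!(j-1) \<in> N" "vs!Suc j \<in> N" "vs!l \<in> N" using inN jl ln by auto
      show ?thesis using three_nb[of N R "vs!j", OF fin deg[OF m(1)] m(2) m(3) m(4) a1 a2 a3 d] by simp
    qed
  qed
  define pr where "pr i = (if i = 0 then n-1 else i-1)" for i
  have fwd: "R (vs!i) (vs!j)" if "i < n" "j < n" "j = Suc i mod n \<or> i = Suc j mod n" for i j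
  proof -
    have one: "R (vs!a) (vs!(Suc a mod n))" if "a < n" for a
    proof (cases "Suc a < n")
      case True thus ?thesis using pt by simp
    next
      case False hence "a = l" using that ln by auto
      thus ?thesis using rl0 ln by simp
    qed
    show ?thesis using that one sym by auto
  qed
  have nb: "b = vs!(Suc i mod n) \<or> b = vs!(pr i)" if "i < n" "b \<in> N" "R (vs!i) b" for i b
  proof (rule ccontr)
    assume neg: "\<not> (b = vs!(Suc i mod n) \<or> b = vs!(pr i))"
    have a1: "R (vs!i) (vs!(Suc i mod n))" using fwd[of i "Suc i mod n"] that n3 by auto
    have a2: "R (vs!i) (vs!(pr i))" using fwd[of i "pr i"] arith_aux[OF n3 that(1)] that
      unfolding pr_def by auto
    have "vs!(Suc i mod n) \<noteq> vs!(pr i)"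
      using arith_aux[OF n3 that(1)] dist unfolding pr_def by (auto simp: nth_eq_iff_index_eq n_def)
    moreover have m: "vs!(Suc i mod n) \<in> N" "vs!(pr i) \<in> N"
      using inN arith_aux[OF n3 that(1)] unfolding pr_def by auto
    ultimately show False using three_nb[of N R "vs!i", OF fin deg[OF inN[OF that(1)]] m that(2) a1 a2 that(3)]
      neg by auto
  qed
  have bwd: "j = Suc i mod n \<or> i = Suc j mod n" if "i < n" "j < n" "R (vs!i) (vs!j)" for i j
  proof -
    have "vs!j = vs!(Suc i mod n) \<or> vs!j = vs!(pr i)" using nb that inN by auto
    hence "j = Suc i mod n \<or> j = pr i"
      using arith_aux[OF n3 that(1)] dist that unfolding pr_def by (auto simp: nth_eq_iff_index_eq n_def)
    thus ?thesis using arith_aux[OF n3 that(1)] unfolding pr_def by auto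
  qed
  let ?Rn = "\<lambda>a b. a \<in> N \<and> b \<in> N \<and> R a b"
  have reach: "?Rn\<^sup>*\<^sup>* u (vs!i)" if "i < n" for i
    using that
  proof (induction i)
    case 0 thus ?case using v0 by simp
  next
    case (Suc i)
    thus ?case using pt[of i] inN[of i] inN[of "Suc i"]
      by (auto intro: rtranclp.rtrancl_into_rtrancl)
  qed
  have bk: "v \<in> set vs" if "?Rn\<^sup>*\<^sup>* u v" for v
    using that
  proof (induction rule: rtranclp_induct)
    case base thus ?case using v0 ne by auto
  next
    case (step a b)
    then obtain i where i: "i < n" "a = vs!i" by (auto simp: in_set_conv_nth n_def)
    hence "b = vs!(Suc i mod n) \<or> b = vs!(pr i)" using nb step by auto
    thus ?case using arith_aux[OF n3 i(1)] unfolding pr_def by (auto simp: n_def)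
  qed
  have seteq: "set vs = component_of N R u"
    unfolding component_of_def using reach bk sub
    by (auto simp: in_set_conv_nth n_def)
  have iff: "\<forall>i<n. \<forall>j<n. R (vs!i) (vs!j) \<longleftrightarrow> (j = Suc i mod n \<or> i = Suc j mod n)"
    using fwd bwd by blast
  show ?thesis unfolding is_cycle_graph_def
    apply (rule exI[of _ vs])
    using seteq dist n3 iff by (simp add: n_def)
qed



lemma chi_ex:
  assumes "finite W" "\<And>a b. E a b \<Longrightarrow> a \<noteq> b"
  shows "\<exists>f. colouring W E (chi W E) f"
proof -
  obtain h where h: "bij_betw h W {0..<card W}" using ex_bij_betw_finite_nat[OF assms(1)] by blast
  have "colouring W E (card W) h"
    unfolding colouring_def using h assms(2) unfolding bij_betw_def inj_on_def by auto
  thus ?thesis using LeastI[of "\<lambda>k. \<exists>f. colouring W E k f" "card W"] unfolding chi_def by blast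
qed

lemma chi_le: "colouring W E m f \<Longrightarrow> chi W E \<le> m"
  unfolding chi_def by (rule Least_le) blast

lemma colouring_mono: "colouring W E m f \<Longrightarrow> m \<le> m' \<Longrightarrow> colouring W E m' f"
  unfolding colouring_def by auto

lemma colouring_proper: "colouring W E m c \<Longrightarrow> u\<in>W \<Longrightarrow> v\<in>W \<Longrightarrow> E u v \<Longrightarrow> c u \<noteq> c v"
  unfolding colouring_def by blast

lemma colouring_range: "colouring W E m c \<Longrightarrow> u\<in>W \<Longrightarrow> c u < m"
  unfolding colouring_def by blast

lemma toolA:
  assumes g: "graph V E" and xy: "E x y" and c: "colouring (V-{x,y}) E m c"
    and no: "\<not>(\<exists>f. colouring V E (Suc m) f)" and a: "a < m"
  shows "\<exists>s\<in>V-{x,y}. c s = a \<and> E x s \<and> E y s"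
proof (rule ccontr)
  assume none: "\<not> ?thesis"
  have sym: "\<And>u v. E u v \<Longrightarrow> E v u" and irr: "\<And>u v. E u v \<Longrightarrow> u \<noteq> v"
    and inV: "\<And>u v. E u v \<Longrightarrow> u \<in> V \<and> v \<in> V" using g unfolding graph_def by auto
  define f where "f v = (if v = x then a else if v = y then m else if c v = a \<and> E x v then m else c v)" for v
  have cr: "\<And>v. v \<in> V-{x,y} \<Longrightarrow> c v < m" and cp: "\<And>u v. u \<in> V-{x,y} \<Longrightarrow> v \<in> V-{x,y} \<Longrightarrow> E u v \<Longrightarrow> c u \<noteq> c v"
    using c unfolding colouring_def by auto
  have xy': "x \<noteq> y" using irr xy by auto
  have "colouring V E (Suc m) f"
    unfolding colouring_def
  proof (intro conjI ballI impI subsetI)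
    fix t assume "t \<in> f ` V"
    then obtain v where v: "v \<in> V" "t = f v" by auto
    show "t \<in> {..<Suc m}" using v a cr[of v] unfolding f_def by auto
  next
    fix u v assume uv: "u \<in> V" "v \<in> V" "E u v"
    have nuv: "u \<noteq> v" using irr uv by auto
    show "f u \<noteq> f v"
    proof (cases "u = x \<or> u = y \<or> v = x \<or> v = y")
      case True
      have n1: "\<not>(v \<in> V-{x,y} \<and> c v = a \<and> E x v \<and> E y v)" for v using none by blast
      show ?thesis
      proof (cases "u = x")
        case True
        thus ?thesis using uv nuv xy' a cr[of v] unfolding f_def by auto
      next
        case ux: False
        show ?thesis
        proof (cases "u = y")
          case True
          thus ?thesis using uv nuv xy' a cr[of v] n1[of v] ux unfolding f_def by auto
        next
          case uy: False
          show ?thesis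
          proof (cases "v = x")
            case True
            thus ?thesis using uv nuv xy' a cr[of u] ux uy sym[OF uv(3)] unfolding f_def by auto
          next
            case vx: False
            hence "v = y" using \<open>u = x \<or> u = y \<or> v = x \<or> v = y\<close> ux uy by auto
            thus ?thesis using uv nuv xy' a cr[of u] n1[of u] ux uy sym[OF uv(3)] unfolding f_def by auto
          qed
        qed
      qed
    next
      case False
      hence "u \<in> V-{x,y}" "v \<in> V-{x,y}" using uv by auto
      have fu: "f u = (if c u = a \<and> E x u then m else c u)" "f v = (if c v = a \<and> E x v then m else c v)"
        using False unfolding f_def by auto
      have "c u \<noteq> c v" "c u < m" "c v < m" using cp[OF _ _ uv(3)] cr \<open>u \<in> V-{x,y}\<close> \<open>v \<in> V-{x,y}\<close> by auto
      thus ?thesis unfolding fu by auto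
    qed
  qed
  thus False using no by blast
qed

lemma colour_edge:
  assumes g: "graph V E" and dc: "double_critical V E" and k: "chi V E = k" and xy: "E x y"
  shows "2 \<le> k \<and> (\<exists>c. colouring (V-{x,y}) E (k-2) c \<and>
           (\<forall>a<k-2. \<exists>s\<in>V-{x,y}. c s = a \<and> E x s \<and> E y s))"
proof -
  have fin: "finite V" and irr: "\<And>u v. E u v \<Longrightarrow> u \<noteq> v"
    and inV: "\<And>u v. E u v \<Longrightarrow> u \<in> V \<and> v \<in> V" using g unfolding graph_def by auto
  obtain f where f: "colouring V E k f" using chi_ex[OF fin irr] k by auto
  have "f x < k" "f y < k" "f x \<noteq> f y" using f inV[OF xy] xy unfolding colouring_def by auto
  hence k2: "2 \<le> k" by linarith
  obtain c0 where c0: "colouring (V-{x,y}) E (chi (V-{x,y}) E) c0"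
    using chi_ex[of "V-{x,y}" E] fin irr by auto
  have "chi (V-{x,y}) E \<le> k - 2" using dc xy k unfolding double_critical_def by auto
  hence c: "colouring (V-{x,y}) E (k-2) c0" using colouring_mono[OF c0] by auto
  have no: "\<not>(\<exists>f. colouring V E (Suc (k-2)) f)"
  proof
    assume "\<exists>f. colouring V E (Suc (k-2)) f"
    then obtain f where "colouring V E (Suc (k-2)) f" by auto
    from chi_le[OF this] k k2 show False by simp
  qed
  show ?thesis using k2 c toolA[OF g xy c no] by blast
qed

theorem proposition14:
  fixes V :: "'a set" and E :: "'a \<Rightarrow> 'a \<Rightarrow> bool" and k :: nat and x :: 'a
  assumes "graph V E"
    and "\<not> complete_graph V E"
    and "double_critical V E"
    and "chi V E = k"
    and "x \<in> V"
    and "degree V E x = k + 1"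
  shows "(\<forall>K\<in>components (nbhd V E x) (compl_edges E).
            card K = 1 \<or> is_cycle_graph K (compl_edges E))
       \<and> (\<exists>K\<in>components (nbhd V E x) (compl_edges E). is_cycle_graph K (compl_edges E))
       \<and> (\<forall>K\<in>components (nbhd V E x) (compl_edges E).
            is_cycle_graph K (compl_edges E) \<longrightarrow> card K \<ge> 5)"
proof -
  note g = assms(1) and dc = assms(3) and k = assms(4)
  have fin: "finite V" and irr: "\<And>u v. E u v \<Longrightarrow> u \<noteq> v"
    and inV: "\<And>u v. E u v \<Longrightarrow> u \<in> V \<and> v \<in> V" and sym: "\<And>u v. E u v \<Longrightarrow> E v u"
    using g unfolding graph_def by auto
  define N where "N = nbhd V E x"
  define R where "R = compl_edges E"
  have finN: "finite N" using fin unfolding N_def nbhd_def by auto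
  have cardN: "card N = k + 1" using assms(6) unfolding N_def degree_def by simp
  have Nx: "\<And>z. z \<in> N \<longleftrightarrow> z \<in> V \<and> E x z" unfolding N_def nbhd_def by auto
  have Rsym: "\<And>a b. R a b \<Longrightarrow> R b a" unfolding R_def compl_edges_def using sym by auto
  have Rirr: "\<And>a. \<not> R a a" unfolding R_def compl_edges_def by auto
  have RE: "\<And>a b. R a b \<longleftrightarrow> a \<noteq> b \<and> \<not> E a b" unfolding R_def compl_edges_def by auto
  have key: "\<exists>c. colouring (V-{x,z}) E (k-2) c \<and> (\<forall>a\<in>N. R a z \<longrightarrow> (\<exists>s\<in>N. R a s \<and> E z s \<and> c s = c a))
              \<and> k - 2 \<le> card {b\<in>N. E z b}" if z: "z \<in> N" for z
  proof -
    have xz: "E x z" using z Nx by auto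
    from colour_edge[OF g dc k xz] obtain c :: "'a \<Rightarrow> nat" where k2: "2 \<le> k" and c: "colouring (V-{x,z}) E (k-2) c"
      and cov: "\<forall>a<k-2. \<exists>s\<in>V-{x,z}. c s = a \<and> E x s \<and> E z s" by blast
    have P: "\<exists>s\<in>N. R a s \<and> E z s \<and> c s = c a" if a: "a \<in> N" "R a z" for a
    proof -
      have aV: "a \<in> V-{x,z}" using a Nx irr RE by auto
      hence "c a < k - 2" using c unfolding colouring_def by auto
      then obtain s where s: "s \<in> V-{x,z}" "c s = c a" "E x s" "E z s" using cov by blast
      have "s \<noteq> a" using s a RE sym by auto
      moreover have "\<not> E a s" using colouring_proper[OF c aV, of s] s by auto
      moreover have "s \<in> N" using s Nx by auto
      ultimately show ?thesis using s RE by blast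
    qed
    have "{..<k-2} \<subseteq> c ` {b\<in>N. E z b}" using cov Nx by force
    hence "card {..<k-2} \<le> card (c ` {b\<in>N. E z b})" by (rule card_mono[rotated]) (use finN in auto)
    also have "\<dots> \<le> card {b\<in>N. E z b}" by (rule card_image_le) (use finN in auto)
    finally show ?thesis using c P by auto
  qed
  have deg: "card {b\<in>N. R z b} \<le> 2" if z: "z \<in> N" for z
  proof -
    from key[OF z] have cn: "k - 2 \<le> card {b\<in>N. E z b}" by blast
    have "N = insert z ({b\<in>N. R z b} \<union> {b\<in>N. E z b})" using z RE by auto
    moreover have "z \<notin> {b\<in>N. R z b} \<union> {b\<in>N. E z b}" using Rirr irr by auto
    moreover have "{b\<in>N. R z b} \<inter> {b\<in>N. E z b} = {}" using RE by auto
    ultimately have "card N = Suc (card {b\<in>N. R z b} + card {b\<in>N. E z b})"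
      using finN by (metis (no_types, lifting) card_Un_disjoint card_insert_disjoint finite_Un finite_subset subset_insertI)
    thus ?thesis using cardN cn by linarith
  qed
  have P: "\<exists>c\<in>N. R a c \<and> c \<noteq> b" if ab: "a\<in>N" "b\<in>N" "R a b" for a b
  proof -
    have "\<exists>c::'a\<Rightarrow>nat. \<forall>a\<in>N. R a b \<longrightarrow> (\<exists>s\<in>N. R a s \<and> E b s \<and> c s = c a)" using key[OF ab(2)] by blast
    then obtain c :: "'a \<Rightarrow> nat" where "\<forall>a\<in>N. R a b \<longrightarrow> (\<exists>s\<in>N. R a s \<and> E b s \<and> c s = c a)" by blast
    then obtain s where "s\<in>N" "R a s" "E b s" using ab by blast
    thus ?thesis using irr by auto
  qed
  have compsub: "component_of N R u \<subseteq> N" for u unfolding component_of_def by auto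
  have part1: "\<forall>K\<in>components N R. card K = 1 \<or> is_cycle_graph K R"
  proof
    fix K assume "K \<in> components N R"
    then obtain u where u: "u \<in> N" "K = component_of N R u" unfolding components_def by auto
    show "card K = 1 \<or> is_cycle_graph K R"
    proof (cases "\<exists>b\<in>N. R u b")
      case True
      then obtain b where "b \<in> N" "R u b" by auto
      thus ?thesis using cycle_comp[OF finN Rsym Rirr deg P u(1)] u by auto
    next
      case False thus ?thesis using singleton_comp[of u N R, OF u(1) False] u by auto
    qed
  qed
  have part2: "\<exists>K\<in>components N R. is_cycle_graph K R"
  proof -
    have "\<exists>a\<in>N. \<exists>b\<in>N. R a b"
    proof (rule ccontr)
      assume "\<not> ?thesis"
      hence cl: "\<And>a b. a \<in> N \<Longrightarrow> b \<in> N \<Longrightarrow> a \<noteq> b \<Longrightarrow> E a b" using RE by blast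
      obtain f where f: "colouring V E k f" using chi_ex[OF fin irr] k by auto
      have "inj_on f N" using f cl Nx unfolding colouring_def inj_on_def by metis
      moreover have "f ` N \<subseteq> {..<k}" using f Nx unfolding colouring_def by auto
      ultimately have "card N \<le> card {..<k}" using card_inj_on_le by blast
      thus False using cardN by simp
    qed
    then obtain a b where ab: "a \<in> N" "b \<in> N" "R a b" by auto
    have "component_of N R a \<in> components N R" using ab unfolding components_def by auto
    thus ?thesis using cycle_comp[OF finN Rsym Rirr deg P ab] by auto
  qed
  have part3: "\<forall>K\<in>components N R. is_cycle_graph K R \<longrightarrow> card K \<ge> 5"
  proof (intro ballI impI)
    fix K assume K: "K \<in> components N R" "is_cycle_graph K R"
    have KN: "K \<subseteq> N" using K(1) compsub unfolding components_def by auto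
    obtain vs where vs: "distinct vs" "set vs = K" "length vs \<ge> 3"
      and iff: "\<And>i j. i < length vs \<Longrightarrow> j < length vs \<Longrightarrow> R (vs!i) (vs!j) \<longleftrightarrow> (j = Suc i mod length vs \<or> i = Suc j mod length vs)"
      using K(2) unfolding is_cycle_graph_def by blast
    have inN: "\<And>i. i < length vs \<Longrightarrow> vs!i \<in> N" using vs KN by auto
    have dst: "\<And>i j. i < length vs \<Longrightarrow> j < length vs \<Longrightarrow> i \<noteq> j \<Longrightarrow> vs!i \<noteq> vs!j"
      using vs(1) by (simp add: nth_eq_iff_index_eq)
    have ck: "card K = length vs" using vs distinct_card by metis
    have n3: "length vs \<noteq> 3"
    proof
      assume l: "length vs = 3"
      have r: "R (vs!1) (vs!0)" "R (vs!1) (vs!2)" "R (vs!0) (vs!2)" using iff[of 1 0] iff[of 1 2] iff[of 0 2] l by auto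
      from key[OF inN[of 0]] l obtain c :: "'a \<Rightarrow> nat" where "\<forall>a\<in>N. R a (vs!0) \<longrightarrow> (\<exists>s\<in>N. R a s \<and> E (vs!0) s \<and> c s = c a)" by auto
      then obtain s where s: "s \<in> N" "R (vs!1) s" "E (vs!0) s" using r inN[of 1] l by auto
      have "s \<noteq> vs!0" "s \<noteq> vs!2" using s r irr RE by auto
      moreover have "vs!0 \<noteq> vs!2" using dst[of 0 2] l by auto
      ultimately show False using three_nb[of N R "vs!1", OF finN deg[OF inN[of 1]] inN[of 0] inN[of 2] s(1) r(1) r(2) s(2)] l by auto
    qed
    have n4: "length vs \<noteq> 4"
    proof
      assume l: "length vs = 4"
      have r: "R (vs!1) (vs!0)" "R (vs!1) (vs!2)" "R (vs!3) (vs!0)" "R (vs!3) (vs!2)" "\<not> R (vs!1) (vs!3)"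
        using iff[of 1 0] iff[of 1 2] iff[of 3 0] iff[of 3 2] iff[of 1 3] l by auto
      have d: "vs!0 \<noteq> vs!2" "vs!1 \<noteq> vs!3" "vs!1 \<noteq> vs!0" "vs!3 \<noteq> vs!0" using dst l by auto
      from key[OF inN[of 0]] l obtain c :: "'a \<Rightarrow> nat" where c: "colouring (V-{x,vs!0}) E (k-2) c"
        and cP: "\<forall>a\<in>N. R a (vs!0) \<longrightarrow> (\<exists>s\<in>N. R a s \<and> E (vs!0) s \<and> c s = c a)" by auto
      obtain s1 where s1: "s1 \<in> N" "R (vs!1) s1" "E (vs!0) s1" "c s1 = c (vs!1)" using cP r inN[of 1] l by auto
      obtain s2 where s2: "s2 \<in> N" "R (vs!3) s2" "E (vs!0) s2" "c s2 = c (vs!3)" using cP r inN[of 3] l by auto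
      have "s1 = vs!2"
      proof (rule ccontr)
        assume "s1 \<noteq> vs!2"
        moreover have "s1 \<noteq> vs!0" using s1 irr by auto
        ultimately show False using three_nb[of N R "vs!1", OF finN deg[OF inN[of 1]] inN[of 0] inN[of 2] s1(1) r(1) r(2) s1(2)] d l by auto
      qed
      moreover have "s2 = vs!2"
      proof (rule ccontr)
        assume "s2 \<noteq> vs!2"
        moreover have "s2 \<noteq> vs!0" using s2 irr by auto
        ultimately show False using three_nb[of N R "vs!3", OF finN deg[OF inN[of 3]] inN[of 0] inN[of 2] s2(1) r(3) r(4) s2(2)] d l by auto
      qed
      ultimately have eq: "c (vs!1) = c (vs!3)" using s1 s2 by simp
      have e13: "E (vs!1) (vs!3)" using r(5) d RE by auto
      have "vs!1 \<in> V-{x,vs!0}" "vs!3 \<in> V-{x,vs!0}" using inN[of 1] inN[of 3] l Nx irr d by auto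
      thus False using c e13 eq unfolding colouring_def by auto
    qed
    show "card K \<ge> 5" using ck vs(3) n3 n4 by linarith
  qed
  show ?thesis using part1 part2 part3 unfolding N_def[symmetric] R_def[symmetric] by blast
qed

end
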